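(* The QDP implementation of the Grover search using density matrix exponentiation generates a sequence of states $\rho_n\in\mathcal{S}_{\mathrm{rel}}$ for all $n\in\mathbb{N}$ whenever $\rho_0=\psi_0\in\mathcal{S}_{\mathrm{rel}}$.
   Context: $|\tau\rangle$ (target) and $|\psi_0\rangle$ (initial) are pure states, $\psi_0=|\psi_0\rangle\langle\psi_0|$; $\mathcal{H}_{\mathrm{rel}}=\mathrm{span}\{|\tau\rangle,|\tau^\perp\rangle\}$ with $|\tau^\perp\rangle\propto|\psi_0\rangle-\langle\tau|\psi_0\rangle|\tau\rangle$; $\mathcal{S}_{\mathrm{rel}}$ is the set of density matrices supported in $\mathcal{H}_{\mathrm{rel}}$. In the QDP implementation of the Grover search, each recursion step maps the current state $\rho_{n-1}$ to $\rho_n$ by a composition of (a) exact partial reflections about the target, $\sigma\mapsto E_s(\tau)\sigma E_s(\tau)^\dagger$ with $E_s(\tau)=\mathbf{1}-(1-e^{-is})|\tau\rangle\langle\tau|$, and (b) density matrix exponentiation channels $\hat E_s^{\rho_{n-1}}(\sigma)=\cos^2(s)\sigma-i\sin(s)\cos(s)[\rho_{n-1},\sigma]+\sin^2(s)\rho_{n-1}$ instructed by copies of $\rho_{n-1}$. *)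

theory Defs
  imports "HOL-Analysis.Analysis"
begin

type_synonym 'n cvec = "complex ^ 'n"
type_synonym 'n cmat = "complex ^ 'n ^ 'n"

definition cinner :: "'n::finite cvec \<Rightarrow> 'n cvec \<Rightarrow> complex" where
  "cinner x y = (\<Sum>i\<in>UNIV. cnj (x $ i) * y $ i)"

definition ketbra :: "'n::finite cvec \<Rightarrow> 'n cvec \<Rightarrow> 'n cmat" where
  "ketbra x y = (\<chi> i j. x $ i * cnj (y $ j))"

definition adj :: "'n::finite cmat \<Rightarrow> 'n cmat" where
  "adj A = (\<chi> i j. cnj (A $ j $ i))"

definition smat :: "complex \<Rightarrow> 'n::finite cmat \<Rightarrow> 'n cmat" where
  "smat c A = (\<chi> i j. c * A $ i $ j)"

definition mtrace :: "'n::finite cmat \<Rightarrow> complex" where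
  "mtrace A = (\<Sum>i\<in>UNIV. A $ i $ i)"

definition density_matrix :: "'n::finite cmat \<Rightarrow> bool" where
  "density_matrix \<rho> \<longleftrightarrow> adj \<rho> = \<rho> \<and>
     (\<forall>x. Im (cinner x (\<rho> *v x)) = 0 \<and> Re (cinner x (\<rho> *v x)) \<ge> 0) \<and>
     mtrace \<rho> = 1"

text \<open>|tau_perp> (unnormalised): |psi0> - <tau|psi0> |tau>\<close>
definition tau_perp :: "'n::finite cvec \<Rightarrow> 'n cvec \<Rightarrow> 'n cvec" where
  "tau_perp \<tau> \<psi>0 = \<psi>0 - cinner \<tau> \<psi>0 *s \<tau>"

definition H_rel :: "'n::finite cvec \<Rightarrow> 'n cvec \<Rightarrow> 'n cvec set" where
  "H_rel \<tau> \<psi>0 = {a *s \<tau> + b *s tau_perp \<tau> \<psi>0 | a b. True}"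

definition S_rel :: "'n::finite cvec \<Rightarrow> 'n cvec \<Rightarrow> 'n cmat set" where
  "S_rel \<tau> \<psi>0 = {\<rho>. density_matrix \<rho> \<and> range (\<lambda>x. \<rho> *v x) \<subseteq> H_rel \<tau> \<psi>0}"

definition E_refl :: "real \<Rightarrow> 'n::finite cvec \<Rightarrow> 'n cmat" where
  "E_refl s \<tau> = mat 1 - smat (1 - exp (- \<i> * complex_of_real s)) (ketbra \<tau> \<tau>)"

definition refl_channel :: "real \<Rightarrow> 'n::finite cvec \<Rightarrow> 'n cmat \<Rightarrow> 'n cmat" where
  "refl_channel s \<tau> \<sigma> = E_refl s \<tau> ** \<sigma> ** adj (E_refl s \<tau>)"

definition dme_channel :: "real \<Rightarrow> 'n::finite cmat \<Rightarrow> 'n cmat \<Rightarrow> 'n cmat" where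
  "dme_channel s \<rho> \<sigma> =
     smat (complex_of_real ((cos s)\<^sup>2)) \<sigma>
     - smat (\<i> * complex_of_real (sin s * cos s)) (\<rho> ** \<sigma> - \<sigma> ** \<rho>)
     + smat (complex_of_real ((sin s)\<^sup>2)) \<rho>"

datatype qdp_op = Refl real | DME real

fun apply_op :: "'n::finite cvec \<Rightarrow> 'n cmat \<Rightarrow> qdp_op \<Rightarrow> 'n cmat \<Rightarrow> 'n cmat" where
  "apply_op \<tau> \<rho> (Refl s) \<sigma> = refl_channel s \<tau> \<sigma>"
| "apply_op \<tau> \<rho> (DME s) \<sigma> = dme_channel s \<rho> \<sigma>"

text \<open>One recursion step: the list of operations is applied (head first) to
  the current state rho_{n-1}, with the DME channels instructed by rho_{n-1}.\<close>
definition qdp_step :: "'n::finite cvec \<Rightarrow> qdp_op list \<Rightarrow> 'n cmat \<Rightarrow> 'n cmat" where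
  "qdp_step \<tau> ops \<rho> = fold (apply_op \<tau> \<rho>) ops \<rho>"

end

theory Submission
  imports Defs
begin


context
  fixes A B :: "complex^'n::finite^'n"
begin

lemma cinner_add_left: "cinner (x + y) z = cinner x z + cinner y z"
  by (simp add: cinner_def sum.distrib algebra_simps)
lemma cinner_add_right: "cinner z (x + y) = cinner z x + cinner z y"
  by (simp add: cinner_def sum.distrib algebra_simps)
lemma cinner_diff_left: "cinner (x - y) z = cinner x z - cinner y z"
  by (simp add: cinner_def sum_subtractf algebra_simps)
lemma cinner_diff_right: "cinner z (x - y) = cinner z x - cinner z y"
  by (simp add: cinner_def sum_subtractf algebra_simps)
lemma cinner_scale_left: "cinner (c *s x) z = cnj c * cinner x z"
  by (simp add: cinner_def sum_distrib_left algebra_simps)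
lemma cinner_scale_right: "cinner z (c *s x) = c * cinner z x"
  by (simp add: cinner_def sum_distrib_left algebra_simps)
lemma cinner_commute: "cinner y x = cnj (cinner x y)"
  by (simp add: cinner_def mult.commute)

lemma mv_add: "(A + B) *v x = A *v x + B *v x"
  by (simp add: vec_eq_iff matrix_vector_mult_def sum.distrib algebra_simps)
lemma mv_diff: "(A - B) *v x = A *v x - B *v x"
  by (simp add: vec_eq_iff matrix_vector_mult_def flip: sum_subtractf; simp add: algebra_simps)
lemma mv_smat: "smat c A *v x = c *s (A *v x)"
  by (simp add: vec_eq_iff matrix_vector_mult_def smat_def sum_distrib_left algebra_simps)
lemma mv_ketbra: "ketbra a b *v x = cinner b x *s a"
  by (simp add: vec_eq_iff matrix_vector_mult_def ketbra_def cinner_def sum_distrib_left sum_distrib_right algebra_simps)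
lemma mv_mult: "(A ** B) *v x = A *v (B *v x)"
  by (simp add: matrix_vector_mul_assoc)
lemma mv_vadd: "A *v (x + y) = A *v x + A *v y"
  by (simp add: vec_eq_iff matrix_vector_mult_def sum.distrib algebra_simps)
lemma mv_vdiff: "A *v (x - y) = A *v x - A *v y"
  by (simp add: vec_eq_iff matrix_vector_mult_def flip: sum_subtractf; simp add: algebra_simps)
lemma mv_vscale: "A *v (c *s x) = c *s (A *v x)"
  by (simp add: vec_eq_iff matrix_vector_mult_def sum_distrib_left; simp add: algebra_simps)

end

lemma cinner_adj: "cinner x (A *v y) = cinner (adj A *v x) y"
proof -
  have "cinner x (A *v y) = (\<Sum>i\<in>UNIV. \<Sum>j\<in>UNIV. cnj (x$i) * A$i$j * y$j)"
    by (simp add: cinner_def matrix_vector_mult_def sum_distrib_left mult.assoc)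
  also have "\<dots> = (\<Sum>j\<in>UNIV. \<Sum>i\<in>UNIV. cnj (x$i) * A$i$j * y$j)"
    by (rule sum.swap)
  also have "\<dots> = cinner (adj A *v x) y"
    by (simp add: cinner_def matrix_vector_mult_def adj_def sum_distrib_right sum_distrib_left; simp add: algebra_simps)
  finally show ?thesis .
qed




lemma adj_adj[simp]: "adj (adj A) = A"
  by (simp add: adj_def vec_eq_iff)
lemma adj_mult: "adj (A ** B) = adj B ** adj A"
  by (simp add: adj_def matrix_matrix_mult_def vec_eq_iff mult.commute)
lemma adj_add: "adj (A + B) = adj A + adj B"
  by (simp add: adj_def vec_eq_iff)
lemma adj_diff: "adj (A - B) = adj A - adj B"
  by (simp add: adj_def vec_eq_iff)
lemma adj_smat: "adj (smat c A) = smat (cnj c) (adj A)"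
  by (simp add: adj_def smat_def vec_eq_iff)
lemma adj_ketbra: "adj (ketbra a b) = ketbra b a"
  by (simp add: adj_def ketbra_def vec_eq_iff)
lemma adj_mat1: "adj (mat 1 :: complex^'n::finite^'n) = mat 1"
  by (simp add: adj_def mat_def vec_eq_iff)

lemma mtrace_add: "mtrace (A + B) = mtrace A + mtrace B"
  by (simp add: mtrace_def sum.distrib)
lemma mtrace_diff: "mtrace (A - B) = mtrace A - mtrace B"
  by (simp add: mtrace_def sum_subtractf)
lemma mtrace_smat: "mtrace (smat c A) = c * mtrace A"
  by (simp add: mtrace_def smat_def sum_distrib_left)
lemma mtrace_ketbra: "mtrace (ketbra a b) = cinner b a"
  by (simp add: mtrace_def ketbra_def cinner_def mult.commute)
lemma mtrace_comm: "mtrace (A ** B) = mtrace (B ** A)"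
  unfolding mtrace_def matrix_matrix_mult_def
  by (simp, subst sum.swap, simp add: mult.commute)

lemma mv_axis: "(A::complex^'n::finite^'n) *v axis j 1 = (\<chi> i. A$i$j)"
  by (simp add: vec_eq_iff matrix_vector_mult_def axis_def if_distrib if_distribR cong: if_cong)
lemma mv_axis_nth[simp]: "((A::complex^'n::finite^'n) *v axis j 1) $ i = A$i$j"
  by (simp add: matrix_vector_mult_def axis_def if_distrib if_distribR cong: if_cong)
lemma cinner_axis: "cinner (axis j 1) v = v$j"
  by (simp add: cinner_def axis_def if_distrib if_distribR cong: if_cong)

lemma mtrace_forms: "mtrace A = (\<Sum>j\<in>UNIV. cinner (axis j 1) (A *v axis j 1))"
  by (simp add: mtrace_def cinner_axis mv_axis)

lemma cinner_expand: "cinner x ((A::complex^'n::finite^'n) *v y) = (\<Sum>j\<in>UNIV. cinner x (A *v axis j 1) * cinner (axis j 1) y)"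
proof -
  have "cinner x (A *v y) = (\<Sum>i\<in>UNIV. \<Sum>j\<in>UNIV. cnj (x$i) * A$i$j * y$j)"
    by (simp add: cinner_def matrix_vector_mult_def sum_distrib_left mult.assoc)
  also have "\<dots> = (\<Sum>j\<in>UNIV. \<Sum>i\<in>UNIV. cnj (x$i) * A$i$j * y$j)"
    by (rule sum.swap)
  also have "\<dots> = (\<Sum>j\<in>UNIV. cinner x (A *v axis j 1) * cinner (axis j 1) y)"
    by (simp only: cinner_axis) (simp add: cinner_def sum_distrib_right)
  finally show ?thesis .
qed



lemma herm_swap: assumes "adj A = A" shows "cinner y (A *v x) = cnj (cinner x (A *v y))"
proof -
  have "cinner y (A *v x) = cinner (adj A *v y) x" by (rule cinner_adj)
  also have "\<dots> = cinner (A *v y) x" using assms by simp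
  also have "\<dots> = cnj (cinner x (A *v y))" by (rule cinner_commute)
  finally show ?thesis .
qed

lemma real_cs:
  fixes a b m :: real
  assumes "\<And>r. 0 \<le> a - 2*r*m + r^2*m*b" "m \<ge> 0" "a \<ge> 0" "b \<ge> 0"
  shows "m \<le> a*b"
proof (cases "m = 0")
  case True then show ?thesis using assms by simp
next
  case False
  then have mp: "m > 0" using assms by simp
  show ?thesis
  proof (cases "b = 0")
    case True
    have "0 \<le> a - 2*((a+1)/(2*m))*m" using assms(1)[of "(a+1)/(2*m)"] True by simp
    also have "\<dots> = -1" using mp by (simp add: field_simps)
    finally show ?thesis by simp
  next
    case False
    then have bp: "b > 0" using assms by simp
    have "0 \<le> a - 2*(1/b)*m + (1/b)^2*m*b" using assms(1)[of "1/b"] .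
    also have "\<dots> = a - m/b" using bp by (simp add: field_simps power2_eq_square)
    finally have "m/b \<le> a" by simp
    then show ?thesis using bp by (simp add: field_simps mult.commute)
  qed
qed

definition psd :: "complex^'n::finite^'n \<Rightarrow> bool" where
  "psd A \<longleftrightarrow> (\<forall>x. Im (cinner x (A *v x)) = 0 \<and> Re (cinner x (A *v x)) \<ge> 0)"

lemma psd_real: "psd A \<Longrightarrow> cinner x (A *v x) = complex_of_real (Re (cinner x (A *v x)))"
  unfolding psd_def by (simp add: complex_eq_iff)

lemma cauchy_schwarz:
  assumes h: "adj A = A" and p: "psd A"
  shows "(cmod (cinner x (A *v y)))^2 \<le> Re (cinner x (A *v x)) * Re (cinner y (A *v y))"
proof -
  define z where "z = cinner x (A *v y)"
  define a where "a = Re (cinner x (A *v x))"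
  define b where "b = Re (cinner y (A *v y))"
  define m where "m = (cmod z)^2"
  have ha: "cinner x (A *v x) = of_real a" using psd_real[OF p, of x] unfolding a_def .
  have hb: "cinner y (A *v y) = of_real b" using psd_real[OF p, of y] unfolding b_def .
  have hyx: "cinner y (A *v x) = cnj z" using herm_swap[OF h, where x=x and y=y] unfolding z_def .
  have zz: "z * cnj z = of_real m" unfolding m_def by (rule complex_norm_square[symmetric])
  have "0 \<le> a - 2*r*m + r^2*m*b" for r
  proof -
    define t where "t = - (of_real r * cnj z)"
    have "0 \<le> Re (cinner (x + t *s y) (A *v (x + t *s y)))" using p unfolding psd_def by blast
    also have "cinner (x + t *s y) (A *v (x + t *s y)) = cinner x (A *v x) + t * cinner x (A *v y)
        + cnj t * cinner y (A *v x) + cnj t * t * cinner y (A *v y)"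
      by (simp add: mv_vadd mv_vscale cinner_add_left cinner_add_right cinner_scale_left
          cinner_scale_right algebra_simps)
    also have "\<dots> = of_real a - of_real r * (z * cnj z) - of_real r * (z * cnj z)
        + of_real (r^2) * (z * cnj z) * of_real b"
      unfolding ha hb hyx t_def z_def[symmetric] by (simp add: algebra_simps power2_eq_square)
    also have "\<dots> = of_real (a - 2*r*m + r^2*m*b)" unfolding zz by simp
    finally show ?thesis by simp
  qed
  moreover have "a \<ge> 0" "b \<ge> 0" using p unfolding psd_def a_def b_def by auto
  ultimately have "m \<le> a*b" using real_cs[of a m b] m_def by simp
  then show ?thesis by (simp add: m_def z_def a_def b_def)
qed




lemma key:
  fixes c s p q r t :: real and \<alpha> \<beta> :: complex
  assumes "p \<ge> 0" "q \<ge> 0" "r \<ge> 0" "t \<ge> 0" "(cmod \<alpha>)^2 \<le> r*p" "(cmod \<beta>)^2 \<le> t*q"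
  shows "Im (complex_of_real (c^2*p*q + s^2*r*t) - \<i> * complex_of_real (s*c) * (\<alpha>*\<beta> - cnj \<beta> * cnj \<alpha>)) = 0 \<and>
         Re (complex_of_real (c^2*p*q + s^2*r*t) - \<i> * complex_of_real (s*c) * (\<alpha>*\<beta> - cnj \<beta> * cnj \<alpha>)) \<ge> 0"
proof -
  define w where "w = \<alpha> * \<beta>"
  define X where "X = c^2*p*q + s^2*r*t"
  define Y where "Y = 2 * s * c*Im w"
  have cw: "cnj \<beta> * cnj \<alpha> = cnj w" by (simp add: w_def mult.commute)
  have eq: "complex_of_real (c^2*p*q + s^2*r*t) - \<i> * complex_of_real (s*c) * (\<alpha>*\<beta> - cnj \<beta> * cnj \<alpha>)
      = complex_of_real (X + Y)"
    unfolding cw w_def[symmetric] X_def Y_def by (simp add: complex_eq_iff)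
  have X0: "X \<ge> 0" using assms by (simp add: X_def)
  have w2: "(cmod w)^2 \<le> (r*p)*(t*q)"
    unfolding w_def norm_mult power_mult_distrib
    by (rule mult_mono) (use assms in auto)
  have "Y^2 = 4 * s^2*c^2*(Im w)^2" by (simp add: Y_def power_mult_distrib)
  also have "\<dots> \<le> 4 * s^2*c^2*(cmod w)^2"
  proof (intro mult_left_mono)
    show "(Im w)^2 \<le> (cmod w)^2"
      using abs_Im_le_cmod[of w] by (metis abs_le_square_iff abs_norm_cancel)
  qed simp
  also have "\<dots> \<le> 4 * s^2*c^2*((r*p)*(t*q))" by (intro mult_left_mono w2) auto
  also have "\<dots> \<le> X^2"
  proof -
    have "X^2 - 4 * s^2*c^2*((r*p)*(t*q)) = (c^2*p*q - s^2*r*t)^2"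
      by (simp add: X_def power2_eq_square algebra_simps)
    then show ?thesis by (smt (verit) zero_le_power2)
  qed
  finally have "Y^2 \<le> X^2" .
  then have "\<bar>Y\<bar> \<le> X" using X0 by (metis abs_le_square_iff abs_of_nonneg)
  then have "X + Y \<ge> 0" by linarith
  then show ?thesis unfolding eq by simp
qed




lemma dme_psd:
  assumes hr: "adj \<rho> = \<rho>" and pr: "psd \<rho>" and tr: "mtrace \<rho> = 1"
      and hs: "adj \<sigma> = \<sigma>" and ps: "psd \<sigma>" and trs: "mtrace \<sigma> = 1"
  shows "psd (dme_channel \<theta> \<rho> \<sigma>)"
  unfolding psd_def
proof
  fix x
  define c where "c = cos \<theta>"
  define sn where "sn = sin \<theta>"
  define e where "e = (\<lambda>j::'a. axis j (1::complex))"
  define \<alpha> where "\<alpha> = (\<lambda>j. cinner x (\<rho> *v e j))"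
  define \<beta> where "\<beta> = (\<lambda>j. cinner (e j) (\<sigma> *v x))"
  define P where "P = (\<lambda>j. Re (cinner (e j) (\<rho> *v e j)))"
  define T where "T = (\<lambda>j. Re (cinner (e j) (\<sigma> *v e j)))"
  define Q where "Q = Re (cinner x (\<sigma> *v x))"
  define R where "R = Re (cinner x (\<rho> *v x))"
  have FP: "cinner (e j) (\<rho> *v e j) = of_real (P j)" for j
    using psd_real[OF pr, of "e j"] unfolding P_def .
  have FT: "cinner (e j) (\<sigma> *v e j) = of_real (T j)" for j
    using psd_real[OF ps, of "e j"] unfolding T_def .
  have FQ: "cinner x (\<sigma> *v x) = of_real Q"
    using psd_real[OF ps, of x] unfolding Q_def .
  have FR: "cinner x (\<rho> *v x) = of_real R"
    using psd_real[OF pr, of x] unfolding R_def .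
  have "mtrace \<rho> = (\<Sum>j\<in>UNIV. cinner (e j) (\<rho> *v e j))" unfolding e_def by (rule mtrace_forms)
  then have trsum: "(\<Sum>j\<in>UNIV. of_real (P j)) = (1::complex)"
    using tr FP by simp
  have "mtrace \<sigma> = (\<Sum>j\<in>UNIV. cinner (e j) (\<sigma> *v e j))" unfolding e_def by (rule mtrace_forms)
  then have trsumT: "(\<Sum>j\<in>UNIV. of_real (T j)) = (1::complex)"
    using trs FT by simp
  have h1: "cinner x (\<rho> *v (\<sigma> *v x)) = (\<Sum>j\<in>UNIV. \<alpha> j * \<beta> j)"
    unfolding \<alpha>_def \<beta>_def e_def by (rule cinner_expand)
  have h2: "cinner x (\<sigma> *v (\<rho> *v x)) = (\<Sum>j\<in>UNIV. cnj (\<beta> j) * cnj (\<alpha> j))"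
  proof -
    have "cinner x (\<sigma> *v (\<rho> *v x)) = (\<Sum>j\<in>UNIV. cinner x (\<sigma> *v e j) * cinner (e j) (\<rho> *v x))"
      unfolding e_def by (rule cinner_expand)
    also have "\<dots> = (\<Sum>j\<in>UNIV. cnj (\<beta> j) * cnj (\<alpha> j))"
      unfolding \<alpha>_def \<beta>_def
      using herm_swap[OF hs, where y=x] herm_swap[OF hr, where x=x] by simp
    finally show ?thesis .
  qed
  have h3: "cinner x (\<sigma> *v x) = (\<Sum>j\<in>UNIV. of_real (P j) * of_real Q)"
    by (simp add: FQ flip: sum_distrib_right trsum)
  have h4: "cinner x (\<rho> *v x) = (\<Sum>j\<in>UNIV. of_real R * of_real (T j))"
    by (simp add: FR flip: sum_distrib_left trsumT)
  have main: "cinner x (dme_channel \<theta> \<rho> \<sigma> *v x) =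
    (\<Sum>j\<in>UNIV. complex_of_real (c^2*P j*Q + sn^2*R*T j)
        - \<i> * complex_of_real (sn*c) * (\<alpha> j*\<beta> j - cnj (\<beta> j) * cnj (\<alpha> j)))"
  proof -
    have "cinner x (dme_channel \<theta> \<rho> \<sigma> *v x) =
      of_real (c^2) * cinner x (\<sigma> *v x)
      - (\<i> * of_real (sn * c)) * (cinner x (\<rho> *v (\<sigma> *v x)) - cinner x (\<sigma> *v (\<rho> *v x)))
      + of_real (sn^2) * cinner x (\<rho> *v x)"
      unfolding dme_channel_def c_def sn_def
      by (simp add: mv_add mv_diff mv_smat mv_mult cinner_add_right cinner_diff_right cinner_scale_right algebra_simps)
    also have "\<dots> = (\<Sum>j\<in>UNIV. complex_of_real (c^2*P j*Q + sn^2*R*T j)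
        - \<i> * complex_of_real (sn*c) * (\<alpha> j*\<beta> j - cnj (\<beta> j) * cnj (\<alpha> j)))"
      unfolding h1 h2 h3 h4
      by (simp add: sum.distrib sum_subtractf sum_distrib_left algebra_simps)
    finally show ?thesis .
  qed
  have cs\<alpha>: "(cmod (\<alpha> j))^2 \<le> R * P j" for j
    using cauchy_schwarz[OF hr pr, of x "e j"] unfolding \<alpha>_def R_def P_def .
  have cs\<beta>: "(cmod (\<beta> j))^2 \<le> T j * Q" for j
    using cauchy_schwarz[OF hs ps, of "e j" x] unfolding \<beta>_def T_def Q_def .
  have nn: "P j \<ge> 0" "T j \<ge> 0" "Q \<ge> 0" "R \<ge> 0" for j
    using pr ps unfolding psd_def P_def T_def Q_def R_def by auto
  have K: "Im (complex_of_real (c^2*P j*Q + sn^2*R*T j)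
        - \<i> * complex_of_real (sn*c) * (\<alpha> j*\<beta> j - cnj (\<beta> j) * cnj (\<alpha> j))) = 0 \<and>
      Re (complex_of_real (c^2*P j*Q + sn^2*R*T j)
        - \<i> * complex_of_real (sn*c) * (\<alpha> j*\<beta> j - cnj (\<beta> j) * cnj (\<alpha> j))) \<ge> 0" for j
    by (rule key) (use nn cs\<alpha> cs\<beta> in auto)
  show "Im (cinner x (dme_channel \<theta> \<rho> \<sigma> *v x)) = 0 \<and> 0 \<le> Re (cinner x (dme_channel \<theta> \<rho> \<sigma> *v x))"
    unfolding main Im_sum Re_sum using K by (simp add: sum_nonneg)
qed




lemma hrel_add: "u \<in> H_rel \<tau> \<psi> \<Longrightarrow> v \<in> H_rel \<tau> \<psi> \<Longrightarrow> u + v \<in> H_rel \<tau> \<psi>"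
  unfolding H_rel_def
proof clarify
  fix a b a' b'
  show "\<exists>a'' b''. a *s \<tau> + b *s tau_perp \<tau> \<psi> + (a' *s \<tau> + b' *s tau_perp \<tau> \<psi>) =
      a'' *s \<tau> + b'' *s tau_perp \<tau> \<psi> \<and> True"
    by (rule exI[of _ "a + a'"], rule exI[of _ "b + b'"]) (simp add: vec_eq_iff algebra_simps)
qed

lemma hrel_scale: "v \<in> H_rel \<tau> \<psi> \<Longrightarrow> c *s v \<in> H_rel \<tau> \<psi>"
  unfolding H_rel_def
proof clarify
  fix a b
  show "\<exists>a'' b''. c *s (a *s \<tau> + b *s tau_perp \<tau> \<psi>) =
      a'' *s \<tau> + b'' *s tau_perp \<tau> \<psi> \<and> True"
    by (rule exI[of _ "c * a"], rule exI[of _ "c * b"]) (simp add: vec_eq_iff algebra_simps)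
qed

lemma hrel_diff: "u \<in> H_rel \<tau> \<psi> \<Longrightarrow> v \<in> H_rel \<tau> \<psi> \<Longrightarrow> u - v \<in> H_rel \<tau> \<psi>"
proof -
  assume "u \<in> H_rel \<tau> \<psi>" "v \<in> H_rel \<tau> \<psi>"
  then have "u + (-1) *s v \<in> H_rel \<tau> \<psi>" by (intro hrel_add hrel_scale)
  moreover have "u + (-1) *s v = u - v" by (simp add: vec_eq_iff)
  ultimately show ?thesis by simp
qed

lemma hrel_tau: "\<tau> \<in> H_rel \<tau> \<psi>"
  unfolding H_rel_def
  by (rule CollectI, rule exI[of _ 1], rule exI[of _ 0]) (simp add: vec_eq_iff)

lemma hrel_psi: "\<psi> \<in> H_rel \<tau> \<psi>"
  unfolding H_rel_def tau_perp_def
  by (rule CollectI, rule exI[of _ "cinner \<tau> \<psi>"], rule exI[of _ 1]) (simp add: vec_eq_iff)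

definition good :: "'n::finite cvec \<Rightarrow> 'n cvec \<Rightarrow> 'n cmat \<Rightarrow> bool" where
  "good \<tau> \<psi> \<rho> \<longleftrightarrow> adj \<rho> = \<rho> \<and> psd \<rho> \<and> mtrace \<rho> = 1 \<and> (\<forall>x. \<rho> *v x \<in> H_rel \<tau> \<psi>)"

lemma good_S_rel: "good \<tau> \<psi> \<rho> \<Longrightarrow> \<rho> \<in> S_rel \<tau> \<psi>"
  unfolding good_def S_rel_def density_matrix_def psd_def by auto

lemma good_init: "cinner \<psi> \<psi> = 1 \<Longrightarrow> good \<tau> \<psi> (ketbra \<psi> \<psi>)"
  unfolding good_def
proof (intro conjI allI)
  show "adj (ketbra \<psi> \<psi>) = ketbra \<psi> \<psi>" by (rule adj_ketbra)
  show "mtrace (ketbra \<psi> \<psi>) = 1" if "cinner \<psi> \<psi> = 1" using that by (simp add: mtrace_ketbra)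
  show "ketbra \<psi> \<psi> *v x \<in> H_rel \<tau> \<psi>" for x
    by (simp add: mv_ketbra hrel_scale hrel_psi)
  show "psd (ketbra \<psi> \<psi>)"
    unfolding psd_def
  proof
    fix x
    have "cinner x (ketbra \<psi> \<psi> *v x) = cinner \<psi> x * cnj (cinner \<psi> x)"
      by (simp add: mv_ketbra cinner_scale_right mult.commute cinner_commute[of x \<psi>])
    also have "\<dots> = of_real ((cmod (cinner \<psi> x))^2)" by (rule complex_norm_square[symmetric])
    finally show "Im (cinner x (ketbra \<psi> \<psi> *v x)) = 0 \<and> 0 \<le> Re (cinner x (ketbra \<psi> \<psi> *v x))"
      by simp
  qed
qed




lemma good_dme:
  assumes gr: "good \<tau> \<psi> \<rho>" and gs: "good \<tau> \<psi> \<sigma>"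
  shows "good \<tau> \<psi> (dme_channel \<theta> \<rho> \<sigma>)"
proof -
  have hr: "adj \<rho> = \<rho>" "psd \<rho>" "mtrace \<rho> = 1" "\<And>x. \<rho> *v x \<in> H_rel \<tau> \<psi>"
    using gr unfolding good_def by auto
  have hs: "adj \<sigma> = \<sigma>" "psd \<sigma>" "mtrace \<sigma> = 1" "\<And>x. \<sigma> *v x \<in> H_rel \<tau> \<psi>"
    using gs unfolding good_def by auto
  have "adj (dme_channel \<theta> \<rho> \<sigma>) = dme_channel \<theta> \<rho> \<sigma>"
    unfolding dme_channel_def
    by (simp add: adj_add adj_diff adj_smat adj_mult hr hs) (simp add: vec_eq_iff smat_def algebra_simps)
  moreover have "mtrace (dme_channel \<theta> \<rho> \<sigma>) = 1"
  proof -
    have "mtrace (dme_channel \<theta> \<rho> \<sigma>) = of_real ((cos \<theta>)\<^sup>2) * mtrace \<sigma>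
       - (\<i> * of_real (sin \<theta> * cos \<theta>)) * (mtrace (\<rho> ** \<sigma>) - mtrace (\<sigma> ** \<rho>))
       + of_real ((sin \<theta>)\<^sup>2) * mtrace \<rho>"
      by (simp only: dme_channel_def mtrace_add mtrace_diff mtrace_smat)
    also have "\<dots> = of_real ((cos \<theta>)\<^sup>2) + of_real ((sin \<theta>)\<^sup>2)"
      using mtrace_comm[of \<sigma> \<rho>] hr hs by simp
    also have "\<dots> = 1" by (simp only: of_real_add[symmetric] sin_cos_squared_add2 of_real_1)
    finally show ?thesis .
  qed
  moreover have "dme_channel \<theta> \<rho> \<sigma> *v x \<in> H_rel \<tau> \<psi>" for x
    unfolding dme_channel_def
    by (simp add: mv_add mv_diff mv_smat mv_mult hrel_add hrel_diff hrel_scale hr(4) hs(4))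
  ultimately show ?thesis using dme_psd[OF hr(1-3) hs(1-3)] unfolding good_def by blast
qed

lemma exp_unit: "cnj (exp (- \<i> * complex_of_real s)) * exp (- \<i> * complex_of_real s) = 1"
  by (simp add: exp_cnj exp_minus_inverse)

lemma good_refl:
  assumes t1: "cinner \<tau> \<tau> = 1" and gs: "good \<tau> \<psi> \<sigma>"
  shows "good \<tau> \<psi> (refl_channel \<theta> \<tau> \<sigma>)"
proof -
  have hs: "adj \<sigma> = \<sigma>" "psd \<sigma>" "mtrace \<sigma> = 1" "\<And>x. \<sigma> *v x \<in> H_rel \<tau> \<psi>"
    using gs unfolding good_def by auto
  define E where "E = E_refl \<theta> \<tau>"
  define k where "k = 1 - exp (- \<i> * complex_of_real \<theta>)"
  have kk: "cnj k * k = k + cnj k"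
    unfolding k_def using exp_unit[of \<theta>] by (simp add: algebra_simps)
  have Ex: "E *v x = x - (k * cinner \<tau> x) *s \<tau>" for x
    unfolding E_def E_refl_def k_def[symmetric]
    by (simp add: mv_diff mv_smat mv_ketbra vec_eq_iff)
  have adjE: "adj E = mat 1 - smat (cnj k) (ketbra \<tau> \<tau>)"
    unfolding E_def E_refl_def k_def[symmetric] by (simp add: adj_diff adj_smat adj_ketbra adj_mat1)
  have AEx: "adj E *v x = x - (cnj k * cinner \<tau> x) *s \<tau>" for x
    unfolding adjE by (simp add: mv_diff mv_smat mv_ketbra vec_eq_iff)
  have unit: "adj E ** E = mat 1"
  proof -
    have "(adj E ** E) *v x = mat 1 *v x" for x
    proof -
      define a where "a = cinner \<tau> x"
      have "k * a + cnj k * (a - k * a) = a * (k + cnj k - cnj k * k)"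
        by (simp add: algebra_simps)
      then have z: "k * a + cnj k * (a - k * a) = 0"
        by (simp add: kk)
      have "(adj E ** E) *v x = x - (k * a) *s \<tau> - (cnj k * (a - k * a)) *s \<tau>"
        by (simp add: mv_mult Ex AEx cinner_diff_right cinner_scale_right t1 a_def)
      also have "\<dots> = x - (k * a + cnj k * (a - k * a)) *s \<tau>"
        by (simp add: vec_eq_iff algebra_simps)
      also have "\<dots> = x" by (simp add: z)
      finally show ?thesis by simp
    qed
    then show ?thesis using matrix_eq by blast
  qed
  have "refl_channel \<theta> \<tau> \<sigma> = E ** \<sigma> ** adj E" unfolding refl_channel_def E_def ..
  moreover have "adj (E ** \<sigma> ** adj E) = E ** \<sigma> ** adj E"
    by (simp add: adj_mult hs matrix_mul_assoc)
  moreover have "mtrace (E ** \<sigma> ** adj E) = 1"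
  proof -
    have "mtrace ((E ** \<sigma>) ** adj E) = mtrace (adj E ** (E ** \<sigma>))" by (rule mtrace_comm)
    also have "\<dots> = mtrace \<sigma>" by (simp add: matrix_mul_assoc unit)
    finally show ?thesis using hs by simp
  qed
  moreover have "psd (E ** \<sigma> ** adj E)"
    unfolding psd_def
  proof
    fix x
    have "cinner x ((E ** \<sigma> ** adj E) *v x) = cinner (adj E *v x) (\<sigma> *v (adj E *v x))"
      by (simp add: mv_mult cinner_adj)
    then show "Im (cinner x ((E ** \<sigma> ** adj E) *v x)) = 0 \<and> 0 \<le> Re (cinner x ((E ** \<sigma> ** adj E) *v x))"
      using hs(2) unfolding psd_def by simp
  qed
  moreover have "(E ** \<sigma> ** adj E) *v x \<in> H_rel \<tau> \<psi>" for x
    by (simp add: mv_mult Ex hrel_diff hrel_scale hrel_tau hs(4))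
  ultimately show ?thesis unfolding good_def by simp
qed

lemma good_fold:
  assumes t1: "cinner \<tau> \<tau> = 1" and gr: "good \<tau> \<psi> \<rho>"
  shows "good \<tau> \<psi> \<sigma> \<Longrightarrow> good \<tau> \<psi> (fold (apply_op \<tau> \<rho>) ops \<sigma>)"
proof (induction ops arbitrary: \<sigma>)
  case Nil then show ?case by simp
next
  case (Cons op ops)
  have "good \<tau> \<psi> (apply_op \<tau> \<rho> op \<sigma>)"
    by (cases op) (simp_all add: good_refl[OF t1 Cons.prems] good_dme[OF gr Cons.prems])
  then show ?case using Cons.IH by simp
qed

theorem corollary1:
  fixes \<tau> \<psi>0 :: "complex ^ 'n::finite"
    and \<rho> :: "nat \<Rightarrow> complex ^ 'n ^ 'n"
    and ops :: "nat \<Rightarrow> qdp_op list"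
  assumes "cinner \<tau> \<tau> = 1" and "cinner \<psi>0 \<psi>0 = 1"
    and "\<rho> 0 = ketbra \<psi>0 \<psi>0"
    and "\<And>n. \<rho> (Suc n) = qdp_step \<tau> (ops n) (\<rho> n)"
  shows "\<forall>n. \<rho> n \<in> S_rel \<tau> \<psi>0"
proof
  fix n
  have "good \<tau> \<psi>0 (\<rho> n)"
  proof (induction n)
    case 0 then show ?case using assms(2,3) good_init by simp
  next
    case (Suc n)
    then show ?case unfolding assms(4) qdp_step_def using good_fold[OF assms(1) Suc Suc] by simp
  qed
  then show "\<rho> n \<in> S_rel \<tau> \<psi>0" by (rule good_S_rel)
qed


end
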